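(* Let $M>0$, $\beta^*>0$, and let $g$ be the log-normal density $g(t)=\frac{1}{t\sigma\sqrt{2\pi}}\exp\!\big(-\frac{(\ln t-\mu)^2}{2\sigma^2}\big)$ for $t>0$, $g(t)=0$ for $t\le0$ ($\mu\in\mathbb{R}$, $\sigma>0$). Let $I$ be the unique $C^1$ solution on $[0,\infty)$ of \[ I'(t)=\beta^*(M-I(t))\Big(I(t)-\int_0^t g(t-s)I(s)\,ds\Big),\qquad I(0)=I_0\in[0,M]. \] Then the limit $I_\infty:=\lim_{t\to\infty}I(t)$ exists in $\mathbb{R}$. *)

theory Defs
  imports "HOL-Analysis.Analysis"
begin

definition lognormal_density :: "real \<Rightarrow> real \<Rightarrow> real \<Rightarrow> real" where
  "lognormal_density \<mu> \<sigma> t =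
     (if t > 0 then exp (- ((ln t - \<mu>)^2) / (2 * \<sigma>^2)) / (t * \<sigma> * sqrt (2 * pi)) else 0)"

end

theory Submission
  imports Defs "HOL-Probability.Probability"
begin

lemma g_nonneg: "\<sigma> > 0 \<Longrightarrow> 0 \<le> lognormal_density \<mu> \<sigma> x"
  by (simp add: lognormal_density_def)

lemma g_bound_lin:
  fixes \<mu> \<sigma> x :: real
  assumes "\<sigma> > 0" "x > 0"
  shows "lognormal_density \<mu> \<sigma> x \<le> exp (2*\<sigma>^2 - 2*\<mu>) / (\<sigma> * sqrt (2*pi)) * x"
proof -
  define u where "u = ln x"
  have xu: "x = exp u" using assms u_def by simp
  have sq: "0 \<le> (u - \<mu> + 2*\<sigma>^2)^2" by simp
  have "- ((u - \<mu>)^2) / (2*\<sigma>^2) \<le> 2*\<sigma>^2 - 2*\<mu> + 2*u"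
    using assms sq by (simp add: field_simps power2_eq_square)
  hence "exp (- ((u - \<mu>)^2) / (2*\<sigma>^2)) \<le> exp (2*\<sigma>^2 - 2*\<mu> + u + u)"
    by simp
  also have "exp (2*\<sigma>^2 - 2*\<mu> + u + u) = exp (2*\<sigma>^2 - 2*\<mu>) * (x * x)"
    by (simp only: exp_add xu mult.assoc)
  finally have "exp (- ((u - \<mu>)^2) / (2*\<sigma>^2)) \<le> exp (2*\<sigma>^2 - 2*\<mu>) * (x * x)" .
  moreover have "0 < x * \<sigma> * sqrt (2*pi)" using assms by simp
  ultimately show ?thesis using assms
    by (simp add: lognormal_density_def u_def[symmetric] divide_simps)
qed

lemma g_bound:
  fixes \<mu> \<sigma> x :: real
  assumes "\<sigma> > 0"
  shows "lognormal_density \<mu> \<sigma> x \<le> exp (\<sigma>^2/2 - \<mu>) / (\<sigma> * sqrt (2*pi))"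
proof (cases "x > 0")
  case False
  thus ?thesis using assms by (simp add: lognormal_density_def)
next
  case True
  define u where "u = ln x"
  have xu: "x = exp u" using True u_def by simp
  have sq: "0 \<le> (u - \<mu> + \<sigma>^2)^2" by simp
  have "- ((u - \<mu>)^2) / (2*\<sigma>^2) \<le> \<sigma>^2/2 - \<mu> + u"
    using assms sq by (simp add: field_simps power2_eq_square)
  hence "exp (- ((u - \<mu>)^2) / (2*\<sigma>^2)) \<le> exp (\<sigma>^2/2 - \<mu> + u)"
    by simp
  also have "exp (\<sigma>^2/2 - \<mu> + u) = exp (\<sigma>^2/2 - \<mu>) * x"
    by (simp add: xu exp_add)
  finally have "exp (- ((u - \<mu>)^2) / (2*\<sigma>^2)) \<le> exp (\<sigma>^2/2 - \<mu>) * x" .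
  moreover have "0 < x * \<sigma> * sqrt (2*pi)" using assms True by simp
  ultimately show ?thesis using assms True
    by (simp add: lognormal_density_def u_def[symmetric] divide_simps)
qed

lemma g_cont:
  fixes \<mu> \<sigma> :: real
  assumes "\<sigma> > 0"
  shows "continuous_on UNIV (lognormal_density \<mu> \<sigma>)"
proof -
  have "isCont (lognormal_density \<mu> \<sigma>) x" for x
  proof -
    consider "x > 0" | "x < 0" | "x = 0" by linarith
    thus ?thesis
    proof cases
      case 1
      have ev: "eventually (\<lambda>y. y > 0) (nhds x)" using eventually_nhds_in_open[of "{0<..}" x] 1
        by (auto elim: eventually_mono)
      have iso: "isCont (\<lambda>y. exp (- ((ln y - \<mu>)^2) / (2 * \<sigma>^2)) / (y * \<sigma> * sqrt (2 * pi))) x"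
        using 1 assms by (intro continuous_intros isCont_ln_pos) auto
      have ev2: "eventually (\<lambda>y. lognormal_density \<mu> \<sigma> y =
          exp (- ((ln y - \<mu>)^2) / (2 * \<sigma>^2)) / (y * \<sigma> * sqrt (2 * pi))) (nhds x)"
        using ev by eventually_elim (simp add: lognormal_density_def)
      show ?thesis by (subst isCont_cong[OF ev2]) (rule iso)
    next
      case 2
      have ev: "eventually (\<lambda>y. y < 0) (nhds x)" using eventually_nhds_in_open[of "{..<0}" x] 2
        by (auto elim: eventually_mono)
      have "eventually (\<lambda>y. lognormal_density \<mu> \<sigma> y = 0) (nhds x)"
        using ev by eventually_elim (simp add: lognormal_density_def)
      thus ?thesis using isCont_cong[of _ "\<lambda>_. 0"] by (metis continuous_const)
    next
      case 3
      define C where "C = exp (2*\<sigma>^2 - 2*\<mu>) / (\<sigma> * sqrt (2*pi))"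
      have b: "norm (lognormal_density \<mu> \<sigma> y) \<le> C * \<bar>y\<bar>" for y
      proof (cases "y > 0")
        case True
        thus ?thesis using g_bound_lin[OF assms, of y \<mu>] g_nonneg[OF assms, of \<mu> y]
          by (simp add: C_def)
      next
        case False
        have "0 \<le> C" using assms by (simp add: C_def)
        have "lognormal_density \<mu> \<sigma> y = 0" using False by (simp add: lognormal_density_def)
        moreover have "0 \<le> C * \<bar>y\<bar>" using \<open>0 \<le> C\<close> by simp
        ultimately show ?thesis by simp
      qed
      have "((\<lambda>y. C * \<bar>y\<bar>) \<longlongrightarrow> 0) (at 0)"
        by (rule tendsto_eq_intros | simp)+
      hence "((lognormal_density \<mu> \<sigma>) \<longlongrightarrow> 0) (at 0)"
        by (rule Lim_null_comparison[OF always_eventually[OF allI[OF b]]])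
      thus ?thesis using 3 by (simp add: isCont_def lognormal_density_def)
    qed
  qed
  thus ?thesis by (simp add: continuous_on_eq_continuous_at)
qed

lemma g_nd:
  assumes "\<sigma> > 0" "x > 0"
  shows "lognormal_density \<mu> \<sigma> x = (1 / x) * normal_density \<mu> \<sigma> (ln x)"
proof -
  have "sqrt (2 * pi * \<sigma>\<^sup>2) = \<sigma> * sqrt (2 * pi)"
    using assms by (simp add: real_sqrt_mult)
  thus ?thesis using assms by (simp add: lognormal_density_def normal_density_def)
qed

lemma nd_cont: "\<sigma> > 0 \<Longrightarrow> continuous_on S (normal_density \<mu> \<sigma>)"
  unfolding normal_density_def by (intro continuous_intros) auto

lemma g_subst:
  assumes "\<sigma> > 0" "0 < a" "a \<le> t"
  shows "(lognormal_density \<mu> \<sigma> has_integral integral {ln a..ln t} (normal_density \<mu> \<sigma>)) {a..t}"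
proof -
  have "((\<lambda>x. (1 / x) *\<^sub>R normal_density \<mu> \<sigma> (ln x)) has_integral
          integral {ln a..ln t} (normal_density \<mu> \<sigma>)) {a..t}"
  proof (rule has_integral_substitution[where c = "ln a" and d = "ln t"])
    show "a \<le> t" by fact
    show "ln a \<le> ln t" using assms by simp
    show "ln ` {a..t} \<subseteq> {ln a..ln t}" using assms by auto
    show "continuous_on {ln a..ln t} (normal_density \<mu> \<sigma>)" by (rule nd_cont[OF assms(1)])
    fix x assume "x \<in> {a..t}"
    hence "x > 0" using assms by auto
    thus "(ln has_real_derivative 1 / x) (at x within {a..t})"
      by (auto intro!: derivative_eq_intros)
  qed
  moreover have "\<And>x. x \<in> {a..t} \<Longrightarrow> (1 / x) *\<^sub>R normal_density \<mu> \<sigma> (ln x) = lognormal_density \<mu> \<sigma> x"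
    using assms g_nd[OF assms(1)] by auto
  ultimately show ?thesis by (rule has_integral_eq[rotated])
qed

lemma nd_has_int: "\<sigma> > 0 \<Longrightarrow> (normal_density \<mu> \<sigma> has_integral 1) UNIV"
  using has_integral_integral_lborel[OF integrable_normal_density] by simp

lemma nd_le:
  assumes "\<sigma> > 0" "u \<le> v"
  shows "integral {u..v} (normal_density \<mu> \<sigma>) \<le> 1 - integral {v..v+1} (normal_density \<mu> \<sigma>)"
proof -
  have i: "normal_density \<mu> \<sigma> integrable_on {u..v+1}"
    by (rule integrable_continuous_interval[OF nd_cont[OF assms(1)]])
  have "integral {u..v+1} (normal_density \<mu> \<sigma>) \<le> integral UNIV (normal_density \<mu> \<sigma>)"
    by (rule integral_subset_le) (use i nd_has_int[OF assms(1)] in auto)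
  also have "\<dots> = 1" using nd_has_int[OF assms(1)] by (rule integral_unique)
  finally show ?thesis
    using Henstock_Kurzweil_Integration.integral_combine[OF assms(2) _ i] by simp
qed

lemma nd_pos:
  assumes "\<sigma> > 0"
  shows "integral {v..v+1} (normal_density \<mu> \<sigma>) > 0"
proof -
  define c0 where "c0 = 1 / sqrt (2 * pi * \<sigma>\<^sup>2) * exp (-(\<bar>v - \<mu>\<bar> + 1)\<^sup>2 / (2 * \<sigma>\<^sup>2))"
  have c0: "c0 > 0" using assms by (simp add: c0_def)
  have le: "c0 \<le> normal_density \<mu> \<sigma> y" if "y \<in> {v..v+1}" for y
  proof -
    have "\<bar>y - \<mu>\<bar> \<le> \<bar>v - \<mu>\<bar> + 1" using that by auto
    hence "\<bar>y - \<mu>\<bar>\<^sup>2 \<le> (\<bar>v - \<mu>\<bar> + 1)\<^sup>2" by (rule power_mono) simp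
    hence "(y - \<mu>)\<^sup>2 \<le> (\<bar>v - \<mu>\<bar> + 1)\<^sup>2" by simp
    hence "-(\<bar>v - \<mu>\<bar> + 1)\<^sup>2 / (2 * \<sigma>\<^sup>2) \<le> -(y - \<mu>)\<^sup>2 / (2 * \<sigma>\<^sup>2)"
      using assms by (simp add: divide_right_mono)
    hence "exp (-(\<bar>v - \<mu>\<bar> + 1)\<^sup>2 / (2 * \<sigma>\<^sup>2)) \<le> exp (-(y - \<mu>)\<^sup>2 / (2 * \<sigma>\<^sup>2))"
      by simp
    hence "1 / sqrt (2 * pi * \<sigma>\<^sup>2) * exp (-(\<bar>v - \<mu>\<bar> + 1)\<^sup>2 / (2 * \<sigma>\<^sup>2))
       \<le> 1 / sqrt (2 * pi * \<sigma>\<^sup>2) * exp (-(y - \<mu>)\<^sup>2 / (2 * \<sigma>\<^sup>2))"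
      by (rule mult_left_mono) simp
    thus ?thesis by (simp only: c0_def normal_density_def)
  qed
  have "integral {v..v+1} (\<lambda>_. c0) \<le> integral {v..v+1} (normal_density \<mu> \<sigma>)"
    by (rule integral_le) (use le integrable_continuous_interval[OF nd_cont[OF assms(1)]] in auto)
  thus ?thesis using c0 by simp
qed

lemma g_int: "\<sigma> > 0 \<Longrightarrow> lognormal_density \<mu> \<sigma> integrable_on {a..b}"
  by (rule integrable_continuous_interval) (rule continuous_on_subset[OF g_cont], auto)

lemma G_lt1:
  assumes "\<sigma> > 0" "t \<ge> 0"
  shows "integral {0..t} (lognormal_density \<mu> \<sigma>) < 1"
proof (cases "t = 0")
  case True thus ?thesis by simp
next
  case False
  hence t: "t > 0" using assms by simp
  define C where "C = exp (\<sigma>^2/2 - \<mu>) / (\<sigma> * sqrt (2*pi))"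
  have C: "C > 0" using assms by (simp add: C_def)
  define c where "c = integral {ln t..ln t+1} (normal_density \<mu> \<sigma>)"
  have c: "c > 0" unfolding c_def by (rule nd_pos[OF assms(1)])
  define a where "a = min t (c / (2*C))"
  have a: "0 < a" "a \<le> t" "a \<le> c / (2*C)" using t c C by (auto simp: a_def)
  have "integral {0..a} (lognormal_density \<mu> \<sigma>) \<le> integral {0..a} (\<lambda>_. C)"
    by (rule integral_le) (use g_int[OF assms(1)] g_bound[OF assms(1)] in \<open>auto simp: C_def\<close>)
  also have "\<dots> = C * a" using a by simp
  also have "\<dots> \<le> c / 2" using a C by (simp add: field_simps)
  finally have 1: "integral {0..a} (lognormal_density \<mu> \<sigma>) \<le> c / 2" .
  have "integral {a..t} (lognormal_density \<mu> \<sigma>) = integral {ln a..ln t} (normal_density \<mu> \<sigma>)"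
    using g_subst[OF assms(1) a(1,2)] by (rule integral_unique)
  also have "\<dots> \<le> 1 - c" unfolding c_def using a by (intro nd_le assms) simp
  finally have 2: "integral {a..t} (lognormal_density \<mu> \<sigma>) \<le> 1 - c" .
  have "integral {0..t} (lognormal_density \<mu> \<sigma>) = integral {0..a} (lognormal_density \<mu> \<sigma>) + integral {a..t} (lognormal_density \<mu> \<sigma>)"
    using Henstock_Kurzweil_Integration.integral_combine[of 0 a t, OF _ _ g_int[OF assms(1)]] a by simp
  thus ?thesis using 1 2 c by linarith
qed

lemma G_nonneg: "\<sigma> > 0 \<Longrightarrow> 0 \<le> integral {0..t} (lognormal_density \<mu> \<sigma>)"
  by (rule integral_nonneg) (use g_int g_nonneg in auto)

lemma G_refl:
  assumes "\<sigma> > 0"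
  shows "integral {0..t} (\<lambda>s. lognormal_density \<mu> \<sigma> (t - s)) = integral {0..t} (lognormal_density \<mu> \<sigma>)"
proof -
  have "integral {0..t} (\<lambda>s. lognormal_density \<mu> \<sigma> (t - s)) = integral {-t..-0} (\<lambda>x. lognormal_density \<mu> \<sigma> (t - (-x)))"
    using Henstock_Kurzweil_Integration.integral_reflect_real[where a=0 and b=t and f="\<lambda>s. lognormal_density \<mu> \<sigma> (t - s)"]
    by simp
  also have "\<dots> = integral {-t..0} (lognormal_density \<mu> \<sigma> \<circ> (\<lambda>x. x + t))"
    by (simp add: o_def add.commute)
  also have "\<dots> = integral {-t+t..0+t} (lognormal_density \<mu> \<sigma>)"
    by (rule integral_shift) (rule continuous_on_subset[OF g_cont[OF assms]], auto)
  finally show ?thesis by simp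
qed

lemma conv_cont:
  assumes "\<sigma> > 0" "continuous_on {0..t} I"
  shows "continuous_on {0..t} (\<lambda>s. lognormal_density \<mu> \<sigma> (t - s) * I s)"
proof -
  have "continuous_on {0..t} (\<lambda>s. lognormal_density \<mu> \<sigma> (t - s))"
    by (rule continuous_on_compose2[OF g_cont[OF assms(1)]]) (auto intro: continuous_intros)
  thus ?thesis using assms(2) by (intro continuous_on_mult)
qed

lemma integral_g_const:
  "integral {0..t} (\<lambda>s. lognormal_density \<mu> \<sigma> (t - s) * c) = c * integral {0..t} (\<lambda>s. lognormal_density \<mu> \<sigma> (t - s))"
  using integral_cmul[where c=c and S="{0..t}" and f="\<lambda>s. lognormal_density \<mu> \<sigma> (t - s)"] by (simp add: mult.commute)

lemma J_upper:
  assumes "\<sigma> > 0" "0 \<le> t" "continuous_on {0..t} I" "\<forall>s\<in>{0..t}. I s \<le> hi"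
  shows "integral {0..t} (\<lambda>s. lognormal_density \<mu> \<sigma> (t - s) * I s) \<le> hi * integral {0..t} (lognormal_density \<mu> \<sigma>)"
proof -
  have "integral {0..t} (\<lambda>s. lognormal_density \<mu> \<sigma> (t - s) * I s) \<le> integral {0..t} (\<lambda>s. lognormal_density \<mu> \<sigma> (t - s) * hi)"
  proof (rule integral_le)
    show "(\<lambda>s. lognormal_density \<mu> \<sigma> (t - s) * I s) integrable_on {0..t}"
      by (rule integrable_continuous_interval[OF conv_cont[OF assms(1,3)]])
    show "(\<lambda>s. lognormal_density \<mu> \<sigma> (t - s) * hi) integrable_on {0..t}"
      by (rule integrable_continuous_interval[OF conv_cont[OF assms(1)]]) (rule continuous_on_const)
    show "lognormal_density \<mu> \<sigma> (t - x) * I x \<le> lognormal_density \<mu> \<sigma> (t - x) * hi" if "x \<in> {0..t}" for x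
      using assms(4) g_nonneg[OF assms(1)] that by (auto intro: mult_left_mono)
  qed
  thus ?thesis by (simp add: integral_g_const G_refl[OF assms(1)] mult.commute)
qed

lemma J_lower:
  assumes "\<sigma> > 0" "0 \<le> t" "continuous_on {0..t} I" "\<forall>s\<in>{0..t}. lo \<le> I s"
  shows "lo * integral {0..t} (lognormal_density \<mu> \<sigma>) \<le> integral {0..t} (\<lambda>s. lognormal_density \<mu> \<sigma> (t - s) * I s)"
proof -
  have "integral {0..t} (\<lambda>s. lognormal_density \<mu> \<sigma> (t - s) * lo) \<le> integral {0..t} (\<lambda>s. lognormal_density \<mu> \<sigma> (t - s) * I s)"
  proof (rule integral_le)
    show "(\<lambda>s. lognormal_density \<mu> \<sigma> (t - s) * I s) integrable_on {0..t}"
      by (rule integrable_continuous_interval[OF conv_cont[OF assms(1,3)]])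
    show "(\<lambda>s. lognormal_density \<mu> \<sigma> (t - s) * lo) integrable_on {0..t}"
      by (rule integrable_continuous_interval[OF conv_cont[OF assms(1)]]) (rule continuous_on_const)
    show "lognormal_density \<mu> \<sigma> (t - x) * lo \<le> lognormal_density \<mu> \<sigma> (t - x) * I x" if "x \<in> {0..t}" for x
      using assms(4) g_nonneg[OF assms(1)] that by (auto intro: mult_left_mono)
  qed
  thus ?thesis by (simp add: integral_g_const G_refl[OF assms(1)] mult.commute)
qed

lemma gron:
  fixes v v' :: "real \<Rightarrow> real"
  assumes "a \<le> b" "v a \<le> 0"
    and d: "\<And>t. t \<in> {a..b} \<Longrightarrow> (v has_real_derivative v' t) (at t within {a..b})"
    and le: "\<And>t. t \<in> {a..b} \<Longrightarrow> v' t \<le> K * v t"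
    and t: "t \<in> {a..b}"
  shows "v t \<le> 0"
proof -
  define h where "h = (\<lambda>t. v t * exp (- K * t))"
  have vc: "continuous_on {a..b} v" using d by (rule DERIV_continuous_on)
  have hc: "continuous_on {a..t} h" unfolding h_def
    by (intro continuous_intros continuous_on_subset[OF vc]) (use t in auto)
  have "h t \<le> h a"
  proof (rule DERIV_nonpos_imp_decreasing_open[of a t h])
    show "a \<le> t" using t by simp
    show "continuous_on {a..t} h" by (rule hc)
    fix x assume x: "a < x" "x < t"
    hence "at x within {a..b} = at x" using t by (intro at_within_interior) auto
    hence dv: "(v has_real_derivative v' x) (at x)" using d[of x] x t by auto
    have "(h has_real_derivative (v' x * exp (- K * x) + v x * (exp (- K * x) * (- K)))) (at x)"
      unfolding h_def by (rule derivative_eq_intros dv refl | simp)+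
    moreover have "v' x * exp (- K * x) + v x * (exp (- K * x) * (- K)) = (v' x - K * v x) * exp (- K * x)"
      by (simp add: algebra_simps)
    moreover have "(v' x - K * v x) * exp (- K * x) \<le> 0"
      using le[of x] x t by (intro mult_nonpos_nonneg) auto
    ultimately show "\<exists>y. (h has_real_derivative y) (at x) \<and> y \<le> 0" by auto
  qed
  moreover have "h a \<le> 0" using assms(2) by (simp add: h_def mult_nonpos_nonneg)
  ultimately have "v t * exp (- K * t) \<le> 0" by (simp add: h_def)
  thus ?thesis by (simp add: mult_le_0_iff)
qed

lemma mono_lim:
  fixes f :: "real \<Rightarrow> real"
  assumes mono: "\<And>x y. T \<le> x \<Longrightarrow> x \<le> y \<Longrightarrow> f x \<le> f y"
    and bd: "\<And>x. T \<le> x \<Longrightarrow> f x \<le> B"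
  shows "\<exists>L. (f \<longlongrightarrow> L) at_top"
proof -
  define L where "L = Sup (f ` {T..})"
  have bdd: "bdd_above (f ` {T..})" using bd by (auto intro!: bdd_aboveI)
  have "(f \<longlongrightarrow> L) at_top"
  proof (rule increasing_tendsto)
    show "eventually (\<lambda>n. f n \<le> L) at_top"
      using eventually_ge_at_top[of T] by eventually_elim (auto simp: L_def intro!: cSUP_upper bdd)
    fix x assume "x < L"
    then obtain y where y: "y \<in> {T..}" "x < f y" unfolding L_def
      using less_cSUP_iff[OF _ bdd] by force
    show "eventually (\<lambda>n. x < f n) at_top"
      using eventually_ge_at_top[of y] by eventually_elim (use y mono in force)
  qed
  thus ?thesis by blast
qed

theorem corollary3p7:
  fixes M \<beta> \<mu> \<sigma> I0 :: real and I :: "real \<Rightarrow> real"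
  assumes "M > 0" and "\<beta> > 0" and "\<sigma> > 0"
    and "0 \<le> I0" and "I0 \<le> M"
    and "I 0 = I0"
    and "\<forall>t\<ge>0. (I has_real_derivative
           (\<beta> * (M - I t) * (I t - integral {0..t} (\<lambda>s. lognormal_density \<mu> \<sigma> (t - s) * I s))))
           (at t within {0..})"
    and "continuous_on {0..}
           (\<lambda>t. \<beta> * (M - I t) * (I t - integral {0..t} (\<lambda>s. lognormal_density \<mu> \<sigma> (t - s) * I s)))"
  shows "\<exists>L::real. (I \<longlongrightarrow> L) at_top"
proof -
  define J where "J = (\<lambda>t. integral {0..t} (\<lambda>s. lognormal_density \<mu> \<sigma> (t - s) * I s))"
  define G where "G = (\<lambda>t. integral {0..t} (lognormal_density \<mu> \<sigma>))"
  define R where "R = (\<lambda>t. \<beta> * (M - I t) * (I t - J t))"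
  have D: "(I has_real_derivative R t) (at t within {0..})" if "0 \<le> t" for t
    using assms(7) that by (simp add: R_def J_def)
  have Ic: "continuous_on {0..} I"
    by (rule DERIV_continuous_on[of "{0..}" I R]) (use D in auto)
  have Ict: "continuous_on {0..t} I" for t
    by (rule continuous_on_subset[OF Ic]) auto
  have G01: "0 \<le> G t" "G t < 1" if "0 \<le> t" for t
    using G_lt1[OF assms(3) that] G_nonneg[OF assms(3)] by (auto simp: G_def)
  have Jup: "J t \<le> hi * G t" if "0 \<le> t" "\<forall>s\<in>{0..t}. I s \<le> hi" for t hi
    using J_upper[OF assms(3) that(1) Ict that(2)] by (simp add: J_def G_def)
  have Jlo: "lo * G t \<le> J t" if "0 \<le> t" "\<forall>s\<in>{0..t}. lo \<le> I s" for t lo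
    using J_lower[OF assms(3) that(1) Ict that(2)] by (simp add: J_def G_def)
  have bnd: "\<exists>B\<ge>0. \<forall>s\<in>{0..b}. \<bar>I s\<bar> \<le> B" for b
  proof -
    have "bounded (I ` {0..b})"
      by (rule compact_imp_bounded[OF compact_continuous_image[OF Ict compact_Icc]])
    then obtain B' where "\<forall>x\<in>I ` {0..b}. \<bar>x\<bar> \<le> B'" by (auto simp: bounded_real)
    thus ?thesis by (intro exI[of _ "max B' 0"]) auto
  qed
  have stayM: "I b = M" if tau: "0 \<le> \<tau>" "I \<tau> = M" "\<tau> \<le> b" for \<tau> b
  proof -
    obtain B where B: "B \<ge> 0" "\<forall>s\<in>{0..b}. \<bar>I s\<bar> \<le> B" using bnd by blast
    define v where "v = (\<lambda>t. (I t - M) * (I t - M))"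
    have "v b \<le> 0"
    proof (rule gron[where a=\<tau> and b=b and v=v and v'="\<lambda>t. 2 * (I t - M) * R t" and K="4 * \<beta> * B"])
      show "\<tau> \<le> b" "v \<tau> \<le> 0" "b \<in> {\<tau>..b}" using tau by (auto simp: v_def)
      fix t assume t: "t \<in> {\<tau>..b}"
      have dI: "(I has_real_derivative R t) (at t within {\<tau>..b})"
        by (rule DERIV_subset[OF D]) (use t tau in auto)
      show "(v has_real_derivative 2 * (I t - M) * R t) (at t within {\<tau>..b})"
        unfolding v_def by (auto intro!: derivative_eq_intros dI simp: algebra_simps)
      have t0: "0 \<le> t" using t tau by auto
      have sub: "\<forall>s\<in>{0..t}. I s \<le> B" "\<forall>s\<in>{0..t}. - B \<le> I s" using B t by force+
      have "J t \<le> B * G t" using Jup[OF t0 sub(1)] .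
      also have "\<dots> \<le> B" using G01[OF t0] B(1) by (simp add: mult_left_le)
      finally have j1: "J t \<le> B" .
      have "- I t \<le> B" using B t t0 by force
      hence JI: "J t - I t \<le> 2 * B" using j1 by simp
      have "2 * (I t - M) * R t = (2 * \<beta> * v t) * (J t - I t)"
        by (simp add: R_def v_def algebra_simps)
      also have "\<dots> \<le> (2 * \<beta> * v t) * (2 * B)"
        using assms(2) JI by (intro mult_left_mono) (auto simp: v_def)
      also have "\<dots> = 4 * \<beta> * B * v t" by simp
      finally show "2 * (I t - M) * R t \<le> 4 * \<beta> * B * v t" .
    qed
    hence "(I b - M) * (I b - M) \<le> 0" by (simp add: v_def)
    thus ?thesis by (simp add: mult_le_0_iff) (smt (verit) mult_le_0_iff)
  qed
  have leM: "I t \<le> M" if t0: "0 \<le> t" for t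
  proof (rule ccontr)
    assume "\<not> I t \<le> M"
    then obtain \<tau> where "0 \<le> \<tau>" "\<tau> \<le> t" "I \<tau> = M"
      using IVT'[of I 0 M t] t0 assms(5,6) Ict by force
    thus False using stayM[of \<tau> t] \<open>\<not> I t \<le> M\<close> by simp
  qed
  have nomax: False if c: "0 \<le> c" "c < b" "0 < I c" "I c < M" "\<forall>s\<in>{0..b}. I s \<le> I c" for c b
  proof -
    have "J c \<le> I c * G c" by (rule Jup) (use c in auto)
    also have "\<dots> < I c" using G01[OF c(1)] c(3) by simp
    finally have "0 < R c" using c assms(2) by (simp add: R_def)
    from has_real_derivative_pos_inc_right[OF D[OF c(1)] this]
    obtain d where d: "d > 0" "\<forall>h>0. c + h \<in> {0..} \<longrightarrow> h < d \<longrightarrow> I c < I (c + h)" by blast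
    define h where "h = min (d/2) (b - c)"
    have "I c < I (c + h)" using d c by (auto simp: h_def)
    moreover have "I (c + h) \<le> I c" using c d by (auto simp: h_def)
    ultimately show False by simp
  qed
  have nomin: False if c: "0 \<le> c" "c < b" "I c < 0" "\<forall>s\<in>{0..b}. I c \<le> I s" for c b
  proof -
    have "I c < I c * G c" using G01[OF c(1)] c(3) by (simp add: mult_less_cancel_left_neg)
    also have "\<dots> \<le> J c" by (rule Jlo) (use c in auto)
    finally have "0 < - R c" using c assms(1,2) by (simp add: R_def mult_pos_neg)
    from has_real_derivative_pos_inc_right[OF DERIV_minus[OF D[OF c(1)]] this]
    obtain d where d: "d > 0" "\<forall>h>0. c + h \<in> {0..} \<longrightarrow> h < d \<longrightarrow> - I c < - I (c + h)" by blast
    define h where "h = min (d/2) (b - c)"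
    have "I (c + h) < I c" using d c by (auto simp: h_def)
    moreover have "I c \<le> I (c + h)" using c d by (auto simp: h_def)
    ultimately show False by simp
  qed
  have incr: "\<exists>L. (I \<longlongrightarrow> L) at_top" if T: "0 \<le> T" "0 < I T" for T
  proof (rule mono_lim[where T=T and B=M])
    show "I x \<le> M" if "T \<le> x" for x using leM that T by simp
    fix x y assume xy: "T \<le> x" "x \<le> y"
    obtain c where c: "c \<in> {0..y}" "\<forall>s\<in>{0..y}. I s \<le> I c"
      using continuous_attains_sup[of "{0..y}" I] Ict xy T by auto
    have Ic0: "0 < I c" using c(2) T xy by force
    show "I x \<le> I y"
    proof (cases "c = y")
      case True thus ?thesis using c xy T by auto
    next
      case False
      hence cy: "c < y" using c by auto
      show ?thesis
      proof (cases "I c = M")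
        case True
        hence "I y = M" using stayM[of c y] c by auto
        thus ?thesis using leM[of x] xy T by simp
      next
        case False
        hence "I c < M" using leM[of c] c by force
        thus ?thesis using nomax[of c y] c cy Ic0 by force
      qed
    qed
  qed
  show ?thesis
  proof (cases "\<exists>T\<ge>0. 0 < I T")
    case True thus ?thesis using incr by blast
  next
    case False
    hence le0: "I t \<le> 0" if "0 \<le> t" for t using that by force
    show ?thesis
    proof (cases "\<exists>b\<ge>0. I b < 0")
      case False
      hence "eventually (\<lambda>t. I t = 0) at_top"
      proof -
        have "\<forall>t\<ge>0. I t = 0" using False le0 by (force simp: not_less)
        thus ?thesis unfolding eventually_at_top_linorder by blast
      qed
      hence "(I \<longlongrightarrow> 0) at_top" by (rule tendsto_eventually)
      thus ?thesis by blast
    next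
      case True
      then obtain b where b: "0 \<le> b" "I b < 0" by blast
      have runmin: "I t \<le> I s" if st: "0 \<le> s" "s \<le> t" for s t
      proof -
        obtain c where c: "c \<in> {0..t}" "\<forall>s\<in>{0..t}. I c \<le> I s"
          using continuous_attains_inf[of "{0..t}" I] Ict st by auto
        show ?thesis
        proof (cases "c = t")
          case True thus ?thesis using c st by auto
        next
          case False
          hence ct: "c < t" using c by auto
          show ?thesis
          proof (cases "I c < 0")
            case True thus ?thesis using nomin[of c t] c ct by auto
          next
            case False
            have "I c \<le> I s" "I c \<le> I t" using c st by auto
            hence "I s = 0" "I t = 0" using False st le0[of s] le0[of t] by auto
            thus ?thesis by simp
          qed
        qed
      qed
      obtain B where B: "B \<ge> 0" "\<forall>s\<in>{0..b}. \<bar>I s\<bar> \<le> B" using bnd by blast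
      define v where "v = (\<lambda>t. I t * I t)"
      have "v b \<le> 0"
      proof (rule gron[where a=0 and b=b and v=v and v'="\<lambda>t. 2 * I t * R t" and K="2 * \<beta> * (M + B)"])
        show "0 \<le> b" "b \<in> {0..b}" using b by auto
        show "v 0 \<le> 0" using le0[of 0] assms(4,6) by (simp add: v_def)
        fix t assume t: "t \<in> {0..b}"
        have t0: "0 \<le> t" using t by auto
        have dI: "(I has_real_derivative R t) (at t within {0..b})"
          by (rule DERIV_subset[OF D]) (use t in auto)
        show "(v has_real_derivative 2 * I t * R t) (at t within {0..b})"
          unfolding v_def by (auto intro!: derivative_eq_intros dI simp: algebra_simps)
        define x where "x = I t"
        define j where "j = J t"
        have x0: "x \<le> 0" using le0[OF t0] by (simp add: x_def)
        have j0: "j \<le> 0" using Jup[OF t0, of 0] le0 by (auto simp: j_def)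
        have jx: "x * G t \<le> j" using Jlo[OF t0, of x] runmin[of _ t] by (auto simp: j_def x_def)
        have "x - j \<le> x * (1 - G t)" using jx by (simp add: algebra_simps)
        also have "\<dots> \<le> 0" using x0 G01[OF t0] by (simp add: mult_nonpos_nonneg)
        finally have xj: "x - j \<le> 0" .
        have P0: "0 \<le> x * (x - j)" using x0 xj by (simp add: mult_nonpos_nonpos)
        have P1: "x * (x - j) \<le> x * x" using x0 j0 by (intro mult_left_mono_neg) auto
        have Mx: "M - x \<le> M + B" using B t x0 by (force simp: x_def)
        have Mx0: "0 \<le> M - x" using x0 assms(1) by simp
        have "(M - x) * (x * (x - j)) \<le> (M + B) * (x * x)"
          by (rule mult_mono[OF Mx P1 _ P0]) (use Mx0 Mx in linarith)
        hence "2 * \<beta> * ((M - x) * (x * (x - j))) \<le> 2 * \<beta> * ((M + B) * (x * x))"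
          using assms(2) by (intro mult_left_mono) auto
        thus "2 * I t * R t \<le> 2 * \<beta> * (M + B) * v t"
          by (simp add: R_def v_def x_def[symmetric] j_def[symmetric] algebra_simps)
      qed
      hence "I b * I b \<le> 0" by (simp add: v_def)
      hence "I b = 0" by (simp add: mult_le_0_iff) (smt (verit) mult_le_0_iff)
      thus ?thesis using b by simp
    qed
  qed
qed

end
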